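(* Consider a complex-balanced mass action chemical reaction network $\Sigma$: $\dot x=-Z\mathcal{L}(x^* )\,\mathrm{Exp}(Z^T\mathrm{Ln}(x/x^* ))$ with complex-equilibrium $x^*\in\mathbb{R}_+^m$. Let $\mathcal{V}_r$ be a set of complexes to be deleted; order the complexes so that those in $\mathcal{V}_r$ come last, partition \[ \mathcal{L}(x^* )=\begin{bmatrix}\mathcal{L}_{11}&\mathcal{L}_{12}\\ \mathcal{L}_{21}&\mathcal{L}_{22}\end{bmatrix},\qquad Z=\begin{bmatrix}Z_1 & Z_2\end{bmatrix} \] accordingly (the second blocks corresponding to $\mathcal{V}_r$), assume $\mathcal{L}_{22}$ is invertible, and let $\hat{\mathcal{L}}(x^* )=\mathcal{L}_{11}-\mathcal{L}_{12}\mathcal{L}_{22}^{-1}\mathcal{L}_{21}$ and $\hat Z=Z_1$. Define the reduced network $\hat\Sigma$: $\dot x=-\hat Z\hat{\mathcal{L}}(x^* )\,\mathrm{Exp}(\hat Z^T\mathrm{Ln}(x/x^* ))$. Let $\mathcal{E}$ and $\hat{\mathcal{E}}$ be the sets of equilibria in $\mathbb{R}_+^m$ of $\Sigma$ and $\hat\Sigma$ respectively. Then $\mathcal{E}\subseteq\hat{\mathcal{E}}$.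
   Context: A mass action chemical reaction network has $m$ species with concentration vector $x\in\mathbb{R}_+^m$ (strictly positive entries), $c$ complexes and $r$ reactions. The complex-stoichiometric matrix $Z\in\mathbb{R}^{m\times c}$ has nonnegative integer entries; its $\alpha$-th column $Z_\alpha$ gives the composition of complex $\alpha$. The graph of complexes has the complexes as vertices and a directed edge for each reaction $j$ from its substrate complex $\mathcal{S}_j$ to its product complex $\mathcal{P}_j$; its incidence matrix $B\in\mathbb{R}^{c\times r}$ has $(\alpha,j)$ entry $-1$ if $\alpha=\mathcal{S}_j$, $+1$ if $\alpha=\mathcal{P}_j$, $0$ otherwise. Reaction $j$ has rate constant $k_j>0$ and rate $v_j(x)=k_j\exp(Z_{\mathcal{S}_j}^T\mathrm{Ln}(x))$. $\mathrm{Ln}$ and $\mathrm{Exp}$ are componentwise logarithm and exponential, $x/x^*$ is componentwise division. With $a_{\pi\sigma}=\sum\{k_j:\mathcal{S}_j=\sigma,\mathcal{P}_j=\pi\}$, $A=(a_{\pi\sigma})$, $\Delta$ diagonal with entries the column sums of $A$, $L=\Delta-A$, the mass action dynamics $\dot x=ZBv(x)$ equal $\dot x=-ZL\,\mathrm{Exp}(Z^T\mathrm{Ln}(x))$. A complex-equilibrium is $x^*\in\mathbb{R}_+^m$ with $Bv(x^* )=0$; the network is complex-balanced if one exists. The weighted Laplacian is $\mathcal{L}(x^* )=L\,\mathrm{diag}_{i=1}^c(\exp(Z_i^T\mathrm{Ln}(x^* )))$; it has zero row and column sums, and with it the dynamics $\dot x=ZBv(x)$ take the form $\dot x=-Z\mathcal{L}(x^*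 )\mathrm{Exp}(Z^T\mathrm{Ln}(x/x^* ))$. An equilibrium of a system $\dot x=f(x)$ is a point $x\in\mathbb{R}_+^m$ with $f(x)=0$. *)

theory Defs
  imports Complex_Main "Jordan_Normal_Form.Matrix"
begin

text \<open>Complexes are indexed 0..<c, species 0..<m, reactions 0..<r.
  Reaction j has substrate complex S j, product complex P j and rate constant k j.\<close>

definition Ln_vec :: "real vec \<Rightarrow> real vec" where
  "Ln_vec v = map_vec ln v"

definition Exp_vec :: "real vec \<Rightarrow> real vec" where
  "Exp_vec v = map_vec exp v"

definition div_vec :: "real vec \<Rightarrow> real vec \<Rightarrow> real vec" where
  "div_vec x y = vec (dim_vec x) (\<lambda>i. x $ i / y $ i)"

definition pos_vec :: "nat \<Rightarrow> real vec \<Rightarrow> bool" where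
  "pos_vec m x \<longleftrightarrow> x \<in> carrier_vec m \<and> (\<forall>i<m. x $ i > 0)"

definition rate_mat :: "nat \<Rightarrow> nat \<Rightarrow> (nat \<Rightarrow> nat) \<Rightarrow> (nat \<Rightarrow> nat) \<Rightarrow> (nat \<Rightarrow> real) \<Rightarrow> real mat" where
  "rate_mat c r S P k = mat c c (\<lambda>(p, s). \<Sum>j\<in>{j. j < r \<and> S j = s \<and> P j = p}. k j)"

definition colsum_diag :: "real mat \<Rightarrow> real mat" where
  "colsum_diag A = mat (dim_row A) (dim_col A)
     (\<lambda>(i, j). if i = j then (\<Sum>p<dim_row A. A $$ (p, j)) else 0)"

definition laplacian :: "nat \<Rightarrow> nat \<Rightarrow> (nat \<Rightarrow> nat) \<Rightarrow> (nat \<Rightarrow> nat) \<Rightarrow> (nat \<Rightarrow> real) \<Rightarrow> real mat" where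
  "laplacian c r S P k = colsum_diag (rate_mat c r S P k) - rate_mat c r S P k"

definition incidence :: "nat \<Rightarrow> nat \<Rightarrow> (nat \<Rightarrow> nat) \<Rightarrow> (nat \<Rightarrow> nat) \<Rightarrow> real mat" where
  "incidence c r S P = mat c r (\<lambda>(a, j). (if a = P j then 1 else 0) - (if a = S j then 1 else 0))"

definition rates :: "real mat \<Rightarrow> nat \<Rightarrow> (nat \<Rightarrow> nat) \<Rightarrow> (nat \<Rightarrow> real) \<Rightarrow> real vec \<Rightarrow> real vec" where
  "rates Z r S k x = vec r (\<lambda>j. k j * exp (col Z (S j) \<bullet> Ln_vec x))"

definition complex_equilibrium ::
  "real mat \<Rightarrow> nat \<Rightarrow> nat \<Rightarrow> (nat \<Rightarrow> nat) \<Rightarrow> (nat \<Rightarrow> nat) \<Rightarrow> (nat \<Rightarrow> real) \<Rightarrow> real vec \<Rightarrow> bool" where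
  "complex_equilibrium Z c r S P k xs \<longleftrightarrow>
     pos_vec (dim_row Z) xs \<and> incidence c r S P *\<^sub>v rates Z r S k xs = 0\<^sub>v c"

definition weighted_laplacian ::
  "real mat \<Rightarrow> nat \<Rightarrow> nat \<Rightarrow> (nat \<Rightarrow> nat) \<Rightarrow> (nat \<Rightarrow> nat) \<Rightarrow> (nat \<Rightarrow> real) \<Rightarrow> real vec \<Rightarrow> real mat" where
  "weighted_laplacian Z c r S P k xs =
     laplacian c r S P k * mat c c (\<lambda>(i, j). if i = j then exp (col Z i \<bullet> Ln_vec xs) else 0)"

definition ma_field :: "real mat \<Rightarrow> real mat \<Rightarrow> real vec \<Rightarrow> real vec \<Rightarrow> real vec" where
  "ma_field Z W xs x = - ((Z * W) *\<^sub>v Exp_vec (transpose_mat Z *\<^sub>v Ln_vec (div_vec x xs)))"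

definition equilibria :: "real mat \<Rightarrow> real mat \<Rightarrow> real vec \<Rightarrow> real vec set" where
  "equilibria Z W xs = {x. pos_vec (dim_row Z) x \<and> ma_field Z W xs x = 0\<^sub>v (dim_row Z)}"

end

theory Submission
  imports Defs
begin

lemma f_nonneg:
  fixes a b :: real assumes "a > 0" "b > 0"
  shows "a * (ln a - ln b) - a + b \<ge> 0"
    and "a * (ln a - ln b) - a + b = 0 \<Longrightarrow> a = b"
proof -
  define t where "t = b / a"
  have t: "t > 0" using assms by (simp add: t_def)
  have lt: "ln t = ln b - ln a" using assms by (simp add: t_def ln_div)
  have eq: "a * (ln a - ln b) - a + b = a * (t - 1 - ln t)"
  proof -
    have "a * (t - 1 - ln t) = a * t - a - a * (ln b - ln a)" by (simp add: lt algebra_simps)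
    moreover have "a * t = b" using assms by (simp add: t_def)
    ultimately show ?thesis by (simp add: algebra_simps)
  qed
  have "ln t \<le> t - 1" using ln_le_minus_one[OF t] .
  then show "a * (ln a - ln b) - a + b \<ge> 0" unfolding eq using assms by simp
  assume "a * (ln a - ln b) - a + b = 0"
  then have "t - 1 - ln t = 0" unfolding eq using assms by simp
  then have "t = 1" using ln_eq_minus_one[OF t] by simp
  then show "a = b" using assms by (simp add: t_def)
qed

lemma generic:
  fixes W :: "nat \<Rightarrow> nat \<Rightarrow> real" and y :: "nat \<Rightarrow> real"
  assumes off: "\<And>p s. p < n \<Longrightarrow> s < n \<Longrightarrow> p \<noteq> s \<Longrightarrow> W p s \<le> 0"
    and rows: "\<And>p. p < n \<Longrightarrow> (\<Sum>s<n. W p s) = 0"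
    and cols: "\<And>s. s < n \<Longrightarrow> (\<Sum>p<n. W p s) = 0"
    and ypos: "\<And>p. p < n \<Longrightarrow> y p > 0"
    and zero: "(\<Sum>p<n. ln (y p) * (\<Sum>s<n. W p s * y s)) = 0"
  shows "\<And>p. p < n \<Longrightarrow> (\<Sum>s<n. W p s * y s) = 0"
proof -
  define g where "g p s = (- W p s) * (y s * (ln (y s) - ln (y p)) - y s + y p)" for p s
  have g_nn: "g p s \<ge> 0" if "p < n" "s < n" for p s
  proof (cases "p = s")
    case True then show ?thesis by (simp add: g_def)
  next
    case False
    then have "- W p s \<ge> 0" using off that by simp
    moreover have "y s * (ln (y s) - ln (y p)) - y s + y p \<ge> 0"
      using f_nonneg(1) ypos that by blast
    ultimately show ?thesis unfolding g_def by (rule mult_nonneg_nonneg)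
  qed
  have c1: "(\<Sum>p<n. \<Sum>s<n. W p s * y s * ln (y s)) = 0"
    apply (subst sum.swap)
    using cols by (simp add: sum_distrib_right[symmetric])
  have c3: "(\<Sum>p<n. \<Sum>s<n. W p s * y s) = 0"
    apply (subst sum.swap)
    using cols by (simp add: sum_distrib_right[symmetric])
  have c4: "(\<Sum>p<n. \<Sum>s<n. W p s * y p) = 0"
    using rows by (simp add: sum_distrib_right[symmetric])
  have "(\<Sum>p<n. \<Sum>s<n. g p s) =
     (\<Sum>p<n. \<Sum>s<n. W p s * y s * ln (y p)) - (\<Sum>p<n. \<Sum>s<n. W p s * y s * ln (y s))
       + (\<Sum>p<n. \<Sum>s<n. W p s * y s) - (\<Sum>p<n. \<Sum>s<n. W p s * y p)"
    unfolding g_def by (simp add: sum_subtractf[symmetric] sum.distrib[symmetric] algebra_simps)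
  also have "(\<Sum>p<n. \<Sum>s<n. W p s * y s * ln (y p)) = 0"
    using zero by (simp add: sum_distrib_left mult.commute mult.left_commute)
  finally have tot: "(\<Sum>p<n. \<Sum>s<n. g p s) = 0" using c1 c3 c4 by simp
  have gz: "g p s = 0" if "p < n" "s < n" for p s
  proof -
    have "\<forall>x\<in>{..<n}. (\<Sum>s<n. g x s) = 0"
    proof -
      have "\<And>x. x < n \<Longrightarrow> 0 \<le> (\<Sum>s<n. g x s)" by (rule sum_nonneg, rule g_nn, auto)
      then show ?thesis using tot sum_nonneg_eq_0_iff[of "{..<n}" "\<lambda>p. \<Sum>s<n. g p s"] by simp
    qed
    then have "(\<Sum>s<n. g p s) = 0" using that by simp
    then show ?thesis using sum_nonneg_eq_0_iff[of "{..<n}" "g p"] g_nn that by simp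
  qed
  fix p assume p: "p < n"
  have "W p s * y s = W p s * y p" if s: "s < n" for s
  proof (cases "p = s \<or> W p s = 0")
    case True then show ?thesis by auto
  next
    case False
    then have "W p s < 0" using off p s by force
    then have "y s * (ln (y s) - ln (y p)) - y s + y p = 0" using gz[OF p s] unfolding g_def by simp
    then have "y s = y p" using f_nonneg(2) ypos p s by blast
    then show ?thesis by simp
  qed
  then have "(\<Sum>s<n. W p s * y s) = (\<Sum>s<n. W p s * y p)"
    by (intro sum.cong) auto
  also have "\<dots> = (\<Sum>s<n. W p s) * y p" by (simp add: sum_distrib_right)
  finally have "(\<Sum>s<n. W p s * y s) = (\<Sum>s<n. W p s) * y p" .
  then show "(\<Sum>s<n. W p s * y s) = 0" using rows p by simp
qed

lemma mult_diag_index: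
  fixes M :: "real mat"
  assumes M: "M \<in> carrier_mat n n" and p: "p < n" and s: "s < n"
  shows "(M * mat n n (\<lambda>(i, j). if i = j then d i else 0)) $$ (p, s) = M $$ (p, s) * d s"
proof -
  have "(M * mat n n (\<lambda>(i, j). if i = j then d i else 0)) $$ (p, s)
        = row M p \<bullet> col (mat n n (\<lambda>(i, j). if i = j then d i else 0)) s"
    using M p s by simp
  also have "\<dots> = (\<Sum>i<n. M $$ (p, i) * (if i = s then d i else 0))"
    using M p s by (simp add: scalar_prod_def lessThan_atLeast0)
  also have "\<dots> = (\<Sum>i<n. if i = s then M $$ (p, s) * d s else 0)"
    by (intro sum.cong) auto
  also have "\<dots> = M $$ (p, s) * d s" using s by simp
  finally show ?thesis .
qed

lemma rate_idx:
  assumes "p < c" "s < c"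
  shows "rate_mat c r S P k $$ (p, s) = (\<Sum>j<r. if S j = s \<and> P j = p then k j else 0)"
proof -
  have "sum k {j. j < r \<and> S j = s \<and> P j = p} = sum k {j \<in> {..<r}. S j = s \<and> P j = p}"
    by (rule arg_cong[where f="sum k"]) auto
  also have "\<dots> = (\<Sum>j<r. if S j = s \<and> P j = p then k j else 0)"
    by (rule sum.inter_filter) simp
  finally show ?thesis using assms unfolding rate_mat_def by simp
qed

lemma lap_idx:
  assumes "p < c" "s < c"
  shows "laplacian c r S P k $$ (p, s) =
     (if p = s then (\<Sum>q<c. rate_mat c r S P k $$ (q, s)) else 0) - rate_mat c r S P k $$ (p, s)"
proof -
  have d: "dim_row (rate_mat c r S P k) = c" "dim_col (rate_mat c r S P k) = c"
    by (simp_all add: rate_mat_def)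
  show ?thesis using assms unfolding laplacian_def colsum_diag_def d
    by (subst index_minus_mat) (simp_all add: d)
qed

lemma lap_carrier: "laplacian c r S P k \<in> carrier_mat c c"
  unfolding laplacian_def rate_mat_def by (rule minus_carrier_mat, rule mat_carrier)


lemma row_col_sums:
  fixes Z :: "real mat"
  assumes Z_dim: "Z \<in> carrier_mat m c"
    and SP: "\<forall>j<r. S j < c \<and> P j < c"
    and k_pos: "\<forall>j<r. k j > 0"
    and ceq: "complex_equilibrium Z c r S P k xs"
  defines "W \<equiv> weighted_laplacian Z c r S P k xs"
  shows "W \<in> carrier_mat c c"
    and "\<And>p s. p < c \<Longrightarrow> s < c \<Longrightarrow> p \<noteq> s \<Longrightarrow> W $$ (p, s) \<le> 0"
    and "\<And>p. p < c \<Longrightarrow> (\<Sum>s<c. W $$ (p, s)) = 0"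
    and "\<And>s. s < c \<Longrightarrow> (\<Sum>p<c. W $$ (p, s)) = 0"
proof -
  define w where "w s = exp (col Z s \<bullet> Ln_vec xs)" for s
  define A where "A = rate_mat c r S P k"
  have Wc: "W \<in> carrier_mat c c" unfolding W_def weighted_laplacian_def
    by (rule mult_carrier_mat[OF lap_carrier mat_carrier])
  then show "W \<in> carrier_mat c c" .
  have Widx: "W $$ (p, s) = ((if p = s then (\<Sum>q<c. A $$ (q, s)) else 0) - A $$ (p, s)) * w s"
    if "p < c" "s < c" for p s
    unfolding W_def weighted_laplacian_def
    by (subst mult_diag_index[OF lap_carrier that]) (simp add: lap_idx[OF that] A_def w_def)
  have Aidx: "A $$ (p, s) = (\<Sum>j<r. if S j = s \<and> P j = p then k j else 0)" if "p < c" "s < c" for p s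
    unfolding A_def by (rule rate_idx[OF that])
  have Ann: "A $$ (p, s) \<ge> 0" if "p < c" "s < c" for p s
    unfolding Aidx[OF that] using k_pos by (intro sum_nonneg) (auto intro: less_imp_le)
  show "\<And>p s. p < c \<Longrightarrow> s < c \<Longrightarrow> p \<noteq> s \<Longrightarrow> W $$ (p, s) \<le> 0"
  proof -
    fix p s assume ps: "p < c" "s < c" "p \<noteq> s"
    have "w s > 0" by (simp add: w_def)
    then show "W $$ (p, s) \<le> 0" unfolding Widx[OF ps(1,2)] using ps Ann[OF ps(1,2)]
      by (simp add: mult_nonneg_nonneg)
  qed
  show "\<And>s. s < c \<Longrightarrow> (\<Sum>p<c. W $$ (p, s)) = 0"
  proof -
    fix s assume s: "s < c"
    have "(\<Sum>p<c. W $$ (p, s)) = (\<Sum>p<c. ((if p = s then (\<Sum>q<c. A $$ (q, s)) else 0) - A $$ (p, s)) * w s)"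
      using Widx s by (intro sum.cong) auto
    also have "\<dots> = ((\<Sum>p<c. (if p = s then (\<Sum>q<c. A $$ (q, s)) else 0)) - (\<Sum>p<c. A $$ (p, s))) * w s"
      by (simp only: left_diff_distrib sum_subtractf sum_distrib_right)
    also have "\<dots> = 0" using s by simp
    finally show "(\<Sum>p<c. W $$ (p, s)) = 0" .
  qed
  show "\<And>p. p < c \<Longrightarrow> (\<Sum>s<c. W $$ (p, s)) = 0"
  proof -
    fix p assume p: "p < c"
    have "(\<Sum>s<c. W $$ (p, s)) = (\<Sum>s<c. ((if p = s then (\<Sum>q<c. A $$ (q, s)) else 0) - A $$ (p, s)) * w s)"
      using Widx p by (intro sum.cong) auto
    also have "\<dots> = (\<Sum>s<c. (if p = s then (\<Sum>q<c. A $$ (q, s)) * w s else 0)) - (\<Sum>s<c. A $$ (p, s) * w s)"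
      by (subst sum_subtractf[symmetric], rule sum.cong, auto simp: left_diff_distrib)
    also have "(\<Sum>s<c. (if p = s then (\<Sum>q<c. A $$ (q, s)) * w s else 0)) = (\<Sum>q<c. A $$ (q, p)) * w p"
      using p by simp
    also have "(\<Sum>q<c. A $$ (q, p)) = (\<Sum>q<c. \<Sum>j<r. if S j = p \<and> P j = q then k j else 0)"
      using Aidx p by (intro sum.cong) auto
    also have "\<dots> = (\<Sum>j<r. \<Sum>q<c. if S j = p \<and> P j = q then k j else 0)"
      by (rule sum.swap)
    also have "\<dots> = (\<Sum>j<r. if S j = p then k j else 0)"
    proof (intro sum.cong refl)
      fix j assume j: "j \<in> {..<r}"
      have "(\<Sum>q<c. if S j = p \<and> P j = q then k j else 0) = (\<Sum>q<c. if q = P j then (if S j = p then k j else 0) else 0)"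
        by (intro sum.cong) auto
      also have "\<dots> = (if S j = p then k j else 0)" using SP j by simp
      finally show "(\<Sum>q<c. if S j = p \<and> P j = q then k j else 0) = (if S j = p then k j else 0)" .
    qed
    also have "(\<Sum>s<c. A $$ (p, s) * w s) = (\<Sum>s<c. \<Sum>j<r. (if S j = s \<and> P j = p then k j else 0) * w s)"
      using Aidx p by (intro sum.cong) (auto simp: sum_distrib_right)
    also have "\<dots> = (\<Sum>j<r. \<Sum>s<c. (if S j = s \<and> P j = p then k j else 0) * w s)"
      by (rule sum.swap)
    also have "\<dots> = (\<Sum>j<r. if P j = p then k j * w (S j) else 0)"
    proof (intro sum.cong refl)
      fix j assume j: "j \<in> {..<r}"
      have "(\<Sum>s<c. (if S j = s \<and> P j = p then k j else 0) * w s) = (\<Sum>s<c. if s = S j then (if P j = p then k j * w (S j) else 0) else 0)"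
        by (intro sum.cong) auto
      also have "\<dots> = (if P j = p then k j * w (S j) else 0)" using SP j by simp
      finally show "(\<Sum>s<c. (if S j = s \<and> P j = p then k j else 0) * w s) = (if P j = p then k j * w (S j) else 0)" .
    qed
    finally have eq1: "(\<Sum>s<c. W $$ (p, s)) = (\<Sum>j<r. if S j = p then k j else 0) * w p - (\<Sum>j<r. if P j = p then k j * w (S j) else 0)" .
    have "(incidence c r S P *\<^sub>v rates Z r S k xs) $ p = 0"
      using ceq p unfolding complex_equilibrium_def by simp
    moreover have "(incidence c r S P *\<^sub>v rates Z r S k xs) $ p
       = (\<Sum>j<r. ((if p = P j then 1 else 0) - (if p = S j then 1 else 0)) * (k j * w (S j)))"
      using p by (simp add: incidence_def rates_def scalar_prod_def lessThan_atLeast0 w_def)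
    moreover have "(\<Sum>j<r. ((if p = P j then 1 else 0) - (if p = S j then 1 else 0)) * (k j * w (S j)))
       = (\<Sum>j<r. if P j = p then k j * w (S j) else 0) - (\<Sum>j<r. if S j = p then k j else 0) * w p"
      by (simp add: sum_distrib_right sum_subtractf[symmetric] left_diff_distrib if_distrib cong: if_cong)
        (intro sum.cong, auto)
    ultimately show "(\<Sum>s<c. W $$ (p, s)) = 0" using eq1 by simp
  qed
qed


lemma mult_zero_vec_helper: "(A :: real mat) \<in> carrier_mat nr nc \<Longrightarrow> A *\<^sub>v 0\<^sub>v nc = 0\<^sub>v nr"
  by (intro eq_vecI) auto

theorem proposition3:
  fixes m c1 c2 r :: nat
    and Z :: "real mat"
    and S P :: "nat \<Rightarrow> nat"
    and k :: "nat \<Rightarrow> real"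
    and xs :: "real vec"
    and L11 L12 L21 L22 L22inv :: "real mat"
  assumes Z_dim: "Z \<in> carrier_mat m (c1 + c2)"
    and Z_nat: "\<forall>i<m. \<forall>a<c1 + c2. Z $$ (i, a) \<in> \<nat>"
    and SP: "\<forall>j<r. S j < c1 + c2 \<and> P j < c1 + c2"
    and k_pos: "\<forall>j<r. k j > 0"
    and ceq: "complex_equilibrium Z (c1 + c2) r S P k xs"
    and split: "split_block (weighted_laplacian Z (c1 + c2) r S P k xs) c1 c1 = (L11, L12, L21, L22)"
    and inv_dim: "L22inv \<in> carrier_mat c2 c2"
    and inv1: "inverts_mat L22 L22inv"
    and inv2: "inverts_mat L22inv L22"
  shows "equilibria Z (weighted_laplacian Z (c1 + c2) r S P k xs) xs
         \<subseteq> equilibria (mat m c1 (\<lambda>ij. Z $$ ij)) (L11 - L12 * L22inv * L21) xs"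
proof
  define c where "c = c1 + c2"
  define W where "W = weighted_laplacian Z c r S P k xs"
  note facts = row_col_sums[OF Z_dim[folded c_def] SP[folded c_def] k_pos ceq[folded c_def], folded W_def]
  have Wc: "W \<in> carrier_mat c c" using facts(1) .
  have dims: "dim_row W = c1 + c2" "dim_col W = c1 + c2" using Wc c_def by auto
  note blk = split_block[OF split[folded c_def, folded W_def] dims]
  have Zr: "dim_row Z = m" using Z_dim by simp
  fix x assume "x \<in> equilibria Z (weighted_laplacian Z (c1 + c2) r S P k xs) xs"
  then have xpos: "pos_vec m x" and feq: "ma_field Z W xs x = 0\<^sub>v m"
    unfolding equilibria_def W_def c_def Zr by auto
  have xc: "x \<in> carrier_vec m" using xpos unfolding pos_vec_def by simp
  define u where "u = Ln_vec (div_vec x xs)"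
  have uc: "u \<in> carrier_vec m" using xc by (intro carrier_vecI) (simp add: u_def Ln_vec_def div_vec_def)
  define y where "y = Exp_vec (transpose_mat Z *\<^sub>v u)"
  have yc: "y \<in> carrier_vec c" using Z_dim by (intro carrier_vecI) (simp add: y_def Exp_vec_def c_def)
  have yidx: "y $ i = exp ((transpose_mat Z *\<^sub>v u) $ i)" if "i < c" for i
    using that Z_dim by (simp add: y_def Exp_vec_def c_def)
  have ZWy: "(Z * W) *\<^sub>v y = 0\<^sub>v m"
  proof -
    have "- ((Z * W) *\<^sub>v y) = 0\<^sub>v m" using feq unfolding ma_field_def y_def u_def .
    moreover have "(Z * W) *\<^sub>v y \<in> carrier_vec m" using Z_dim by (intro carrier_vecI) simp
    ultimately show ?thesis using uminus_zero_vec_eq by blast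
  qed
  have Wyc: "W *\<^sub>v y \<in> carrier_vec c" using Wc by (intro carrier_vecI) simp
  have ZWy': "Z *\<^sub>v (W *\<^sub>v y) = 0\<^sub>v m"
    using ZWy assoc_mult_mat_vec[of Z m c W c y] Z_dim Wc yc c_def by simp
  have "(transpose_mat Z *\<^sub>v u) \<bullet> (W *\<^sub>v y) = u \<bullet> (Z *\<^sub>v (W *\<^sub>v y))"
    by (rule transpose_vec_mult_scalar[OF Z_dim[folded c_def] Wyc uc])
  also have "\<dots> = 0" using ZWy' uc by simp
  finally have sp0: "(transpose_mat Z *\<^sub>v u) \<bullet> (W *\<^sub>v y) = 0" .
  have Wyidx: "(W *\<^sub>v y) $ p = (\<Sum>s<c. W $$ (p, s) * y $ s)" if "p < c" for p
    using that Wc yc by (simp add: scalar_prod_def lessThan_atLeast0)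
  have ypos: "y $ p > 0" if "p < c" for p using yidx[OF that] by simp
  have "(\<Sum>p<c. ln (y $ p) * (\<Sum>s<c. W $$ (p, s) * y $ s)) = 0"
  proof -
    have "(\<Sum>p<c. ln (y $ p) * (\<Sum>s<c. W $$ (p, s) * y $ s))
        = (\<Sum>p<c. (transpose_mat Z *\<^sub>v u) $ p * (W *\<^sub>v y) $ p)"
      by (intro sum.cong refl) (simp add: yidx Wyidx)
    also have "\<dots> = (transpose_mat Z *\<^sub>v u) \<bullet> (W *\<^sub>v y)"
      using Wc Z_dim by (simp add: scalar_prod_def lessThan_atLeast0 c_def)
    finally show ?thesis using sp0 by simp
  qed
  from generic[of c "\<lambda>p s. W $$ (p, s)" "\<lambda>p. y $ p", OF facts(2,3,4) ypos this]
  have rowz: "\<And>p. p < c \<Longrightarrow> (\<Sum>s<c. W $$ (p, s) * y $ s) = 0" by blast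
  have Wy0: "W *\<^sub>v y = 0\<^sub>v c"
    by (rule eq_vecI) (use Wc rowz Wyidx in auto)
  define yh where "yh = vec c1 (\<lambda>i. y $ i)"
  define y2 where "y2 = vec c2 (\<lambda>i. y $ (c1 + i))"
  have yhc: "yh \<in> carrier_vec c1" unfolding yh_def by simp
  have y2c: "y2 \<in> carrier_vec c2" unfolding y2_def by simp
  have ysplit: "y = yh @\<^sub>v y2"
    by (rule eq_vecI) (use yc in \<open>auto simp: c_def yh_def y2_def\<close>)
  have Wyb: "W *\<^sub>v y = (L11 *\<^sub>v yh + L12 *\<^sub>v y2) @\<^sub>v (L21 *\<^sub>v yh + L22 *\<^sub>v y2)"
    unfolding ysplit by (subst blk(5), rule four_block_mat_mult_vec[OF blk(1-4) yhc y2c])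
  have z0: "0\<^sub>v c = 0\<^sub>v c1 @\<^sub>v 0\<^sub>v c2"
    by (rule eq_vecI) (auto simp: c_def)
  have "(L11 *\<^sub>v yh + L12 *\<^sub>v y2) @\<^sub>v (L21 *\<^sub>v yh + L22 *\<^sub>v y2) = 0\<^sub>v c1 @\<^sub>v 0\<^sub>v c2"
    using Wy0 Wyb z0 by metis
  moreover have "L11 *\<^sub>v yh + L12 *\<^sub>v y2 \<in> carrier_vec c1" using blk(1,2) by (intro carrier_vecI) simp
  ultimately have e1: "L11 *\<^sub>v yh + L12 *\<^sub>v y2 = 0\<^sub>v c1" and e2: "L21 *\<^sub>v yh + L22 *\<^sub>v y2 = 0\<^sub>v c2"
    using append_vec_eq[of "L11 *\<^sub>v yh + L12 *\<^sub>v y2" c1 "0\<^sub>v c1"] by auto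
  define v where "v = L21 *\<^sub>v yh"
  have vc: "v \<in> carrier_vec c2" unfolding v_def using blk(3) by (intro carrier_vecI) simp
  have L22y2c: "L22 *\<^sub>v y2 \<in> carrier_vec c2" using blk(4) by (intro carrier_vecI) simp
  have "L22inv *\<^sub>v (v + L22 *\<^sub>v y2) = 0\<^sub>v c2"
    using e2 mult_zero_vec_helper[OF inv_dim] unfolding v_def by simp
  moreover have "L22inv *\<^sub>v (v + L22 *\<^sub>v y2) = L22inv *\<^sub>v v + L22inv *\<^sub>v (L22 *\<^sub>v y2)"
    by (rule mult_add_distrib_mat_vec[OF inv_dim vc L22y2c])
  moreover have "L22inv *\<^sub>v (L22 *\<^sub>v y2) = y2"
  proof -
    have "L22inv *\<^sub>v (L22 *\<^sub>v y2) = (L22inv * L22) *\<^sub>v y2"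
      using assoc_mult_mat_vec[OF inv_dim blk(4) y2c] by simp
    also have "L22inv * L22 = 1\<^sub>m c2" using inv2 inv_dim unfolding inverts_mat_def by simp
    finally show ?thesis using y2c by simp
  qed
  ultimately have e3: "L22inv *\<^sub>v v + y2 = 0\<^sub>v c2" by simp
  define w where "w = L22inv *\<^sub>v v"
  have wc: "w \<in> carrier_vec c2" unfolding w_def using inv_dim by (intro carrier_vecI) simp
  have e4: "L12 *\<^sub>v w + L12 *\<^sub>v y2 = 0\<^sub>v c1"
  proof -
    have "L12 *\<^sub>v w + L12 *\<^sub>v y2 = L12 *\<^sub>v (w + y2)"
      by (rule mult_add_distrib_mat_vec[OF blk(2) wc y2c, symmetric])
    also have "\<dots> = 0\<^sub>v c1" using e3 mult_zero_vec_helper[OF blk(2)] unfolding w_def by simp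
    finally show ?thesis .
  qed
  define Lh where "Lh = L11 - L12 * L22inv * L21"
  have L1c: "L12 * L22inv * L21 \<in> carrier_mat c1 c1" using blk(2,3) inv_dim by simp
  have Lhy: "Lh *\<^sub>v yh = 0\<^sub>v c1"
  proof -
    have "Lh *\<^sub>v yh = L11 *\<^sub>v yh - (L12 * L22inv * L21) *\<^sub>v yh"
      unfolding Lh_def by (rule minus_mult_distrib_mat_vec[OF blk(1) L1c yhc])
    also have "(L12 * L22inv * L21) *\<^sub>v yh = L12 *\<^sub>v w"
    proof -
      have "(L12 * L22inv * L21) *\<^sub>v yh = (L12 * L22inv) *\<^sub>v (L21 *\<^sub>v yh)"
        by (rule assoc_mult_mat_vec) (use blk(2,3) inv_dim yhc in auto)
      also have "\<dots> = L12 *\<^sub>v (L22inv *\<^sub>v (L21 *\<^sub>v yh))"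
        by (rule assoc_mult_mat_vec) (use blk(2,3) inv_dim vc[unfolded v_def] in auto)
      finally show ?thesis unfolding w_def v_def .
    qed
    finally have eq: "Lh *\<^sub>v yh = L11 *\<^sub>v yh - L12 *\<^sub>v w" .
    show ?thesis
    proof (rule eq_vecI)
      show "dim_vec (Lh *\<^sub>v yh) = dim_vec (0\<^sub>v c1)" unfolding eq using blk(1,2) by simp
      fix i assume "i < dim_vec (0\<^sub>v c1)"
      then have i: "i < c1" by simp
      have a: "(L11 *\<^sub>v yh) $ i + (L12 *\<^sub>v y2) $ i = 0"
        using arg_cong[OF e1, of "\<lambda>z. z $ i"] i blk(1,2) by simp
      have b: "(L12 *\<^sub>v w) $ i + (L12 *\<^sub>v y2) $ i = 0"
        using arg_cong[OF e4, of "\<lambda>z. z $ i"] i blk(1,2) by simp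
      show "(Lh *\<^sub>v yh) $ i = 0\<^sub>v c1 $ i" unfolding eq using i blk(1,2) a b by simp
    qed
  qed
  define Z1 where "Z1 = mat m c1 (\<lambda>ij. Z $$ ij)"
  have Z1c: "Z1 \<in> carrier_mat m c1" unfolding Z1_def by simp
  have Eyh: "Exp_vec (transpose_mat Z1 *\<^sub>v u) = yh"
  proof (rule eq_vecI)
    show "dim_vec (Exp_vec (transpose_mat Z1 *\<^sub>v u)) = dim_vec yh"
      unfolding Exp_vec_def yh_def Z1_def by simp
    fix i assume "i < dim_vec yh"
    then have i: "i < c1" unfolding yh_def by simp
    have colZ: "col Z1 i = col Z i"
      by (rule eq_vecI) (use Z_dim i in \<open>auto simp: Z1_def\<close>)
    have ic: "i < c" using i c_def by simp
    show "Exp_vec (transpose_mat Z1 *\<^sub>v u) $ i = yh $ i"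
      using i ic Z_dim colZ yidx[OF ic] unfolding Exp_vec_def yh_def by (simp add: Z1_def c_def)
  qed
  have "ma_field Z1 Lh xs x = 0\<^sub>v m"
  proof -
    have "ma_field Z1 Lh xs x = - ((Z1 * Lh) *\<^sub>v yh)"
      unfolding ma_field_def Eyh[unfolded u_def] ..
    also have "(Z1 * Lh) *\<^sub>v yh = Z1 *\<^sub>v (Lh *\<^sub>v yh)"
      by (rule assoc_mult_mat_vec[OF Z1c _ yhc]) (unfold Lh_def, rule minus_carrier_mat[OF L1c])
    also have "\<dots> = 0\<^sub>v m" using Lhy mult_zero_vec_helper[OF Z1c] by simp
    finally show ?thesis by simp
  qed
  then show "x \<in> equilibria (mat m c1 (\<lambda>ij. Z $$ ij)) (L11 - L12 * L22inv * L21) xs"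
    using xpos unfolding equilibria_def Z1_def[symmetric] Lh_def[symmetric] using Z1c by simp
qed
end
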